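(* For every integer $\ell$ with $\mu_q(n)\le\ell<n$, one has $|\Omega_\ell|<n^{\ell/\mu_q(n)}$.
   Context: Let $q$ be a prime power, $\mathbb{F}=\mathbb{F}_{q^2}$, $G$ a finite abelian group of odd order $n$ with $\gcd(n,q)=1$, and $\mathbb{F}G$ its group algebra. Let $\tau:\mathbb{F}G\to\mathbb{F}G$, $\sum_g\alpha_g g\mapsto\sum_g\alpha_g^q g^{-1}$. Let $e_0=\frac1n\sum_g g$. The primitive idempotents are $e_0$; $e_1,\dots,e_r$ ($\neq e_0$, fixed by $\tau$); and $e_{r+1},\tau(e_{r+1}),\dots,e_{r+s},\tau(e_{r+s})$ (not fixed by $\tau$). Put $\widehat{e}_{r+j}=e_{r+j}+\tau(e_{r+j})$ and $\widehat{E}^\dagger=\{e_1,\dots,e_r,\widehat{e}_{r+1},\dots,\widehat{e}_{r+s}\}$. Let $\mu_q(n)=\min\{\dim_{\mathbb{F}}\mathbb{F}Ge: e\text{ primitive idempotent},\ e\neq e_0\}$. For an integer $\ell$, $\Omega_\ell$ is the set of subspaces $J=\bigoplus_{e\in S}\mathbb{F}Ge$ of $\mathbb{F}G$ with $S\subseteq\widehat{E}^\dagger$ and $\dim_{\mathbb{F}}J=\ell$. *)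

theory Defs
  imports Complex_Main "HOL-Library.Function_Algebras" "HOL-Computational_Algebra.Primes"
begin

text \<open>The group algebra FG of a finite abelian group G (written additively, as the
  type 'g) over a finite field F (the type 'f) is represented by the functions
  'g \<Rightarrow> 'f (coefficient functions); addition and F-scaling are pointwise and the
  algebra multiplication is convolution.\<close>

definition ga_mult :: "('g::{ab_group_add,finite} \<Rightarrow> 'f::field) \<Rightarrow> ('g \<Rightarrow> 'f) \<Rightarrow> ('g \<Rightarrow> 'f)" where
  "ga_mult a b = (\<lambda>g. \<Sum>h\<in>UNIV. a h * b (g - h))"

definition ga_scale :: "'f::field \<Rightarrow> ('g \<Rightarrow> 'f) \<Rightarrow> ('g \<Rightarrow> 'f)" where
  "ga_scale c a = (\<lambda>g. c * a g)"

text \<open>tau(sum a_g g) = sum a_g^q g^{-1}: the coefficient at g is (a(-g))^q.\<close>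
definition ga_tau :: "nat \<Rightarrow> ('g::{ab_group_add,finite} \<Rightarrow> 'f::field) \<Rightarrow> ('g \<Rightarrow> 'f)" where
  "ga_tau q a = (\<lambda>g. (a (- g)) ^ q)"

definition ga_idempotent :: "('g::{ab_group_add,finite} \<Rightarrow> 'f::field) \<Rightarrow> bool" where
  "ga_idempotent e \<longleftrightarrow> ga_mult e e = e"

definition ga_primitive_idempotent :: "('g::{ab_group_add,finite} \<Rightarrow> 'f::field) \<Rightarrow> bool" where
  "ga_primitive_idempotent e \<longleftrightarrow> e \<noteq> 0 \<and> ga_idempotent e \<and>
     \<not> (\<exists>e1 e2. ga_idempotent e1 \<and> ga_idempotent e2 \<and> e1 \<noteq> 0 \<and> e2 \<noteq> 0 \<and>
            ga_mult e1 e2 = 0 \<and> e = e1 + e2)"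

definition ga_e0 :: "('g::{ab_group_add,finite} \<Rightarrow> 'f::field)" where
  "ga_e0 = (\<lambda>g::'g. inverse (of_nat (card (UNIV :: 'g set))))"

definition ga_ideal :: "('g::{ab_group_add,finite} \<Rightarrow> 'f::field) \<Rightarrow> ('g \<Rightarrow> 'f) set" where
  "ga_ideal e = {ga_mult x e | x. True}"

definition ga_dim :: "('g::{ab_group_add,finite} \<Rightarrow> 'f::field) set \<Rightarrow> nat" where
  "ga_dim J = vector_space.dim (ga_scale :: 'f \<Rightarrow> ('g \<Rightarrow> 'f) \<Rightarrow> ('g \<Rightarrow> 'f)) J"

definition mu_q :: "'g::{ab_group_add,finite} itself \<Rightarrow> 'f::field itself \<Rightarrow> nat" where
  "mu_q tg tf = Min {ga_dim (ga_ideal (e :: 'g \<Rightarrow> 'f)) | e. ga_primitive_idempotent e \<and> e \<noteq> ga_e0}"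

definition Ehat_dagger :: "nat \<Rightarrow> ('g::{ab_group_add,finite} \<Rightarrow> 'f::field) set" where
  "Ehat_dagger q =
     {e. ga_primitive_idempotent e \<and> e \<noteq> ga_e0 \<and> ga_tau q e = e} \<union>
     {e + ga_tau q e | e. ga_primitive_idempotent e \<and> ga_tau q e \<noteq> e}"

definition ga_ideal_sum :: "('g::{ab_group_add,finite} \<Rightarrow> 'f::field) set \<Rightarrow> ('g \<Rightarrow> 'f) set" where
  "ga_ideal_sum S = {\<Sum>e\<in>S. x e | x. \<forall>e\<in>S. x e \<in> ga_ideal e}"

definition Omega :: "nat \<Rightarrow> nat \<Rightarrow> ('g::{ab_group_add,finite} \<Rightarrow> 'f::field) set set" where
  "Omega q l = {J. \<exists>S. S \<subseteq> Ehat_dagger q \<and> J = ga_ideal_sum S \<and> ga_dim J = l}"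

end

theory Submission
  imports Defs "HOL-Number_Theory.Residues"
begin


definition ga_one :: "('g::{ab_group_add,finite} \<Rightarrow> 'f::field)" where
  "ga_one = (\<lambda>g. if g = 0 then 1 else 0)"

lemma ga_mult_comm: "ga_mult a b = (ga_mult b a :: 'g::{ab_group_add,finite} \<Rightarrow> 'f::field)"
proof (rule ext)
  fix g :: 'g
  show "ga_mult a b g = ga_mult b a g"
    unfolding ga_mult_def
    by (rule sum.reindex_bij_witness[where i="\<lambda>h. g - h" and j="\<lambda>h. g - h"]) (auto simp: mult.commute)
qed

lemma ga_mult_assoc: "ga_mult (ga_mult a b) c = (ga_mult a (ga_mult b c) :: 'g::{ab_group_add,finite} \<Rightarrow> 'f::field)"
proof (rule ext)
  fix g :: 'g
  have "ga_mult (ga_mult a b) c g = (\<Sum>h\<in>UNIV. \<Sum>k\<in>UNIV. a k * b (h - k) * c (g - h))"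
    unfolding ga_mult_def by (simp add: sum_distrib_right)
  also have "\<dots> = (\<Sum>k\<in>UNIV. \<Sum>h\<in>UNIV. a k * b (h - k) * c (g - h))"
    by (rule sum.swap)
  also have "\<dots> = (\<Sum>k\<in>UNIV. a k * (\<Sum>j\<in>UNIV. b j * c (g - k - j)))"
  proof (rule sum.cong[OF refl])
    fix k
    have "(\<Sum>h\<in>UNIV. a k * b (h - k) * c (g - h)) = (\<Sum>j\<in>UNIV. a k * b j * c (g - k - j))"
      by (rule sum.reindex_bij_witness[where i="\<lambda>j. j + k" and j="\<lambda>h. h - k"])
         (auto simp: algebra_simps)
    then show "(\<Sum>h\<in>UNIV. a k * b (h - k) * c (g - h)) = a k * (\<Sum>j\<in>UNIV. b j * c (g - k - j))"
      by (simp add: sum_distrib_left mult.assoc)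
  qed
  also have "\<dots> = ga_mult a (ga_mult b c) g"
    unfolding ga_mult_def by simp
  finally show "ga_mult (ga_mult a b) c g = ga_mult a (ga_mult b c) g" .
qed

lemma ga_mult_add_left: "ga_mult (a + b) c = ga_mult a c + (ga_mult b c :: 'g::{ab_group_add,finite} \<Rightarrow> 'f::field)"
  by (simp add: ga_mult_def fun_eq_iff distrib_right sum.distrib)

lemma ga_mult_diff_left: "ga_mult (a - b) c = ga_mult a c - (ga_mult b c :: 'g::{ab_group_add,finite} \<Rightarrow> 'f::field)"
  by (simp add: ga_mult_def fun_eq_iff left_diff_distrib sum_subtractf)

lemma ga_mult_add_right: "ga_mult c (a + b) = ga_mult c a + (ga_mult c b :: 'g::{ab_group_add,finite} \<Rightarrow> 'f::field)"
  by (simp add: ga_mult_def fun_eq_iff distrib_left sum.distrib)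

lemma ga_mult_diff_right: "ga_mult c (a - b) = ga_mult c a - (ga_mult c b :: 'g::{ab_group_add,finite} \<Rightarrow> 'f::field)"
  by (simp add: ga_mult_def fun_eq_iff right_diff_distrib sum_subtractf)

lemma ga_mult_zero_left[simp]: "ga_mult 0 c = (0 :: 'g::{ab_group_add,finite} \<Rightarrow> 'f::field)"
  by (simp add: ga_mult_def fun_eq_iff)

lemma ga_mult_zero_right[simp]: "ga_mult c 0 = (0 :: 'g::{ab_group_add,finite} \<Rightarrow> 'f::field)"
  by (simp add: ga_mult_def fun_eq_iff)

lemma ga_mult_scale_left: "ga_mult (ga_scale r a) c = ga_scale r (ga_mult a c :: 'g::{ab_group_add,finite} \<Rightarrow> 'f::field)"
  by (simp add: ga_mult_def ga_scale_def fun_eq_iff sum_distrib_left mult.assoc)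

lemma ga_mult_sum_left: "ga_mult (\<Sum>i\<in>S. f i) c = (\<Sum>i\<in>S. ga_mult (f i) c :: 'g::{ab_group_add,finite} \<Rightarrow> 'f::field)"
proof (induction S rule: infinite_finite_induct)
  case (infinite A)
  then show ?case by (simp only: sum.infinite[OF infinite] ga_mult_zero_left)
next
  case empty
  then show ?case by (simp only: sum.empty ga_mult_zero_left)
next
  case (insert x F)
  then show ?case by (simp only: sum.insert[OF insert(1,2)] ga_mult_add_left insert(3))
qed

lemma ga_mult_one_right[simp]: "ga_mult a ga_one = (a :: 'g::{ab_group_add,finite} \<Rightarrow> 'f::field)"
proof (rule ext)
  fix g :: 'g
  have "ga_mult a ga_one g = (\<Sum>h\<in>UNIV. if h = g then a h else 0)"
    unfolding ga_mult_def ga_one_def by (rule sum.cong) auto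
  then show "ga_mult a ga_one g = a g" by simp
qed

lemma ga_mult_one_left[simp]: "ga_mult ga_one a = (a :: 'g::{ab_group_add,finite} \<Rightarrow> 'f::field)"
  using ga_mult_comm ga_mult_one_right by metis

lemma ga_mult_left_commute: "ga_mult a (ga_mult b c) = ga_mult b (ga_mult a c :: 'g::{ab_group_add,finite} \<Rightarrow> 'f::field)"
  by (metis ga_mult_assoc ga_mult_comm)

lemmas ga_mult_ac = ga_mult_assoc ga_mult_comm ga_mult_left_commute


lemma ga_mult_4: "ga_mult (ga_mult a b) (ga_mult c d) = ga_mult (ga_mult a c) (ga_mult b d :: 'g::{ab_group_add,finite} \<Rightarrow> 'f::field)"
  by (simp only: ga_mult_ac)

lemma prim_half:
  fixes e f :: "'g::{ab_group_add,finite} \<Rightarrow> 'f::field"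
  assumes e: "ga_primitive_idempotent e" and f: "ga_idempotent f"
  shows "ga_mult e f = 0 \<or> ga_mult e f = e"
proof -
  have ee: "ga_mult e e = e" using e unfolding ga_primitive_idempotent_def ga_idempotent_def by blast
  have ff: "ga_mult f f = f" using f unfolding ga_idempotent_def by blast
  define x where "x = ga_mult e f"
  define y where "y = e - ga_mult e f"
  have efe: "ga_mult (ga_mult e f) e = ga_mult e f"
    by (metis ee ga_mult_ac)
  have efef: "ga_mult (ga_mult e f) (ga_mult e f) = ga_mult e f"
    by (simp only: ga_mult_4 ee ff)
  have xi: "ga_idempotent x" unfolding x_def ga_idempotent_def using efef .
  have yi: "ga_idempotent y" unfolding y_def ga_idempotent_def
    by (simp add: ga_mult_diff_left ga_mult_diff_right ee efe efef)
       (metis ga_mult_comm efe)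
  have xy: "ga_mult x y = 0" unfolding x_def y_def
    by (simp add: ga_mult_diff_right efe efef)
  have "e = x + y" unfolding x_def y_def by simp
  then have "\<not> (x \<noteq> 0 \<and> y \<noteq> 0)"
    using e xi yi xy unfolding ga_primitive_idempotent_def by blast
  then show ?thesis unfolding x_def y_def by auto
qed

lemma prim_orth:
  fixes e f :: "'g::{ab_group_add,finite} \<Rightarrow> 'f::field"
  assumes e: "ga_primitive_idempotent e" and f: "ga_primitive_idempotent f"
  shows "ga_mult e f = 0 \<or> e = f"
proof -
  have "ga_idempotent e" "ga_idempotent f" using e f unfolding ga_primitive_idempotent_def by auto
  then have "ga_mult e f = 0 \<or> ga_mult e f = e" "ga_mult f e = 0 \<or> ga_mult f e = f"
    using prim_half e f by blast+
  then show ?thesis by (metis ga_mult_comm)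
qed


section \<open>Field facts\<close>

lemma field_power_card_same:
  fixes x :: "'a :: {field,finite}"
  shows   "x ^ card (UNIV :: 'a set) = x"
proof (cases "x = 0")
  case False
  have "x * (\<Prod>y\<in>UNIV-{0}. x * y) = x * x ^ (card (UNIV :: 'a set) - 1) * \<Prod>(UNIV-{0})"
    by (simp add: prod.distrib mult_ac)
  also have "x * x ^ (card (UNIV :: 'a set) - 1) = x ^ Suc (card (UNIV :: 'a set) - 1)"
    by (subst power_Suc) auto
  also have "Suc (card (UNIV :: 'a set) - 1) = card (UNIV :: 'a set)"
    using finite_UNIV_card_ge_0[where ?'a = 'a] by simp
  also have "(\<Prod>y\<in>UNIV-{0}. x * y) = (\<Prod>y\<in>UNIV-{0}. y)"
    by (rule prod.reindex_bij_witness[of _ "\<lambda>y. y / x" "\<lambda>y. x * y"]) (use False in auto)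
  finally show ?thesis
    by simp
qed (use finite_UNIV_card_ge_0[where ?'a = 'a] in auto)

lemma field_CHAR_eq:
  assumes p: "prime p" and k: "k > 0" and card: "card (UNIV :: ('f::{field,finite}) set) = (p ^ k) ^ 2"
  shows "CHAR('f) = p"
proof -
  have pos: "CHAR('f) > 0" by (rule finite_imp_CHAR_pos) simp
  have pr: "prime CHAR('f)" using prime_CHAR_semidom[OF pos] .
  have "CHAR('f) dvd p ^ (k * 2)" using CHAR_dvd_CARD[where 'a='f] card by (simp add: power_mult)
  then have "CHAR('f) dvd p" using pr prime_dvd_power by blast
  then show ?thesis using pr p by (simp add: primes_dvd_imp_eq)
qed

locale frob =
  fixes q :: nat and ty :: "'f::field itself"
  assumes q_pos: "q > 0"
    and frob_add: "\<And>x y :: 'f. (x + y) ^ q = x ^ q + y ^ q"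
    and frob_invol: "\<And>x :: 'f. (x ^ q) ^ q = x"
begin

lemma frob_sum: "(\<Sum>i\<in>A. h i :: 'f) ^ q = (\<Sum>i\<in>A. h i ^ q)"
proof (induction A rule: infinite_finite_induct)
  case (insert x F)
  then show ?case by (simp add: frob_add)
qed (use q_pos in auto)

lemma frob_of_nat: "(of_nat m :: 'f) ^ q = of_nat m"
proof (induction m)
  case (Suc m)
  then show ?case by (simp add: frob_add)
qed (use q_pos in auto)

end

lemma frob_from_assms:
  assumes "\<exists>p k. prime p \<and> k > 0 \<and> q = p ^ k"
    and "card (UNIV :: ('f::{field,finite}) set) = q ^ 2"
  shows "frob TYPE('f) q"
proof -
  obtain p k where p: "prime p" "k > 0" "q = p ^ k" using assms(1) by blast
  have ch: "CHAR('f) = p" using field_CHAR_eq[OF p(1,2)] assms(2) p(3) by simp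
  show ?thesis
  proof
    show "q > 0" using p prime_gt_0_nat by simp
    show "(x + y) ^ q = x ^ q + y ^ q" for x y :: 'f
      by (rule freshmans_dream'[where n=k]) (use p ch in auto)
    show "(x ^ q) ^ q = x" for x :: 'f
      using field_power_card_same[of x] assms(2) by (simp add: power_mult[symmetric] power2_eq_square)
  qed
qed


context frob
begin

lemma tau_add: "ga_tau q (a + b) = ga_tau q a + (ga_tau q b :: 'g::{ab_group_add,finite} \<Rightarrow> 'f)"
  by (simp add: ga_tau_def fun_eq_iff frob_add)

lemma tau_diff: "ga_tau q (a - b) = ga_tau q a - (ga_tau q b :: 'g::{ab_group_add,finite} \<Rightarrow> 'f)"
proof -
  have "ga_tau q a = ga_tau q (a - b) + ga_tau q b" using tau_add[of "a - b" b] by simp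
  then show ?thesis by simp
qed

lemma tau_zero[simp]: "ga_tau q (0 :: 'g::{ab_group_add,finite} \<Rightarrow> 'f) = 0"
  using q_pos by (simp add: ga_tau_def fun_eq_iff)

lemma tau_tau[simp]: "ga_tau q (ga_tau q a) = (a :: 'g::{ab_group_add,finite} \<Rightarrow> 'f)"
  by (simp add: ga_tau_def fun_eq_iff frob_invol)

lemma tau_inj: "ga_tau q a = ga_tau q b \<Longrightarrow> a = (b :: 'g::{ab_group_add,finite} \<Rightarrow> 'f)"
  by (metis tau_tau)

lemma tau_eq_0_iff[simp]: "ga_tau q a = 0 \<longleftrightarrow> a = (0 :: 'g::{ab_group_add,finite} \<Rightarrow> 'f)"
  by (metis tau_tau tau_zero)

lemma tau_mult: "ga_tau q (ga_mult a b) = ga_mult (ga_tau q a) (ga_tau q b :: 'g::{ab_group_add,finite} \<Rightarrow> 'f)"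
proof (rule ext)
  fix g :: 'g
  have "ga_tau q (ga_mult a b) g = (\<Sum>h\<in>UNIV. a h ^ q * b (- g - h) ^ q)"
    by (simp add: ga_tau_def ga_mult_def frob_sum power_mult_distrib)
  also have "\<dots> = (\<Sum>h\<in>UNIV. a (- h) ^ q * b (- (g - h)) ^ q)"
    apply (rule sum.reindex_bij_witness[where i="\<lambda>h. - h" and j="\<lambda>h. - h"])
      apply auto
    done
  also have "\<dots> = ga_mult (ga_tau q a) (ga_tau q b) g"
    by (simp add: ga_tau_def ga_mult_def)
  finally show "ga_tau q (ga_mult a b) g = ga_mult (ga_tau q a) (ga_tau q b) g" .
qed

lemma tau_idem: "ga_idempotent e \<Longrightarrow> ga_idempotent (ga_tau q (e :: 'g::{ab_group_add,finite} \<Rightarrow> 'f))"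
  unfolding ga_idempotent_def by (metis tau_mult)

lemma tau_primitive:
  assumes "ga_primitive_idempotent (e :: 'g::{ab_group_add,finite} \<Rightarrow> 'f)"
  shows "ga_primitive_idempotent (ga_tau q e)"
proof -
  have e: "e \<noteq> 0" "ga_idempotent e"
    and np: "\<And>e1 e2. ga_idempotent e1 \<Longrightarrow> ga_idempotent e2 \<Longrightarrow> e1 \<noteq> 0 \<Longrightarrow> e2 \<noteq> 0 \<Longrightarrow>
            ga_mult e1 e2 = 0 \<Longrightarrow> e \<noteq> e1 + e2"
    using assms unfolding ga_primitive_idempotent_def by blast+
  show ?thesis unfolding ga_primitive_idempotent_def
  proof (intro conjI notI)
    show "ga_tau q e = 0 \<Longrightarrow> False" using e by simp
    show "ga_idempotent (ga_tau q e)" using tau_idem e by blast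
    assume "\<exists>e1 e2. ga_idempotent e1 \<and> ga_idempotent e2 \<and> e1 \<noteq> 0 \<and> e2 \<noteq> 0 \<and>
            ga_mult e1 e2 = 0 \<and> ga_tau q e = e1 + e2"
    then obtain e1 e2 where h: "ga_idempotent e1" "ga_idempotent e2" "e1 \<noteq> 0" "e2 \<noteq> 0"
            "ga_mult e1 e2 = 0" "ga_tau q e = e1 + e2" by blast
    have "e = ga_tau q e1 + ga_tau q e2" using h(6) by (metis tau_add tau_tau)
    moreover have "ga_mult (ga_tau q e1) (ga_tau q e2) = 0" using h(5) by (metis tau_mult tau_zero)
    moreover have "ga_tau q e1 \<noteq> 0" "ga_tau q e2 \<noteq> 0" using h by simp_all
    ultimately show False using np[OF tau_idem[OF h(1)] tau_idem[OF h(2)]] by blast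
  qed
qed

lemma tau_e0: "ga_tau q (ga_e0 :: 'g::{ab_group_add,finite} \<Rightarrow> 'f) = ga_e0"
  by (simp add: ga_tau_def ga_e0_def fun_eq_iff power_inverse frob_of_nat)

end

lemma mult_e0: "ga_mult x (ga_e0 :: 'g::{ab_group_add,finite} \<Rightarrow> 'f::field) = ga_scale (sum x UNIV) ga_e0"
  by (simp add: ga_mult_def ga_e0_def ga_scale_def fun_eq_iff sum_distrib_right)

lemma e0_idem:
  assumes "of_nat (card (UNIV :: 'g set)) \<noteq> (0::'f::field)"
  shows "ga_mult ga_e0 ga_e0 = (ga_e0 :: 'g::{ab_group_add,finite} \<Rightarrow> 'f)"
  using assms by (simp add: ga_mult_def ga_e0_def fun_eq_iff)

lemma e0_nz:
  assumes "of_nat (card (UNIV :: 'g set)) \<noteq> (0::'f::field)"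
  shows "(ga_e0 :: 'g::{ab_group_add,finite} \<Rightarrow> 'f) \<noteq> 0"
  using assms by (simp add: ga_e0_def fun_eq_iff)

lemma e0_primitive:
  assumes n: "of_nat (card (UNIV :: 'g set)) \<noteq> (0::'f::field)"
  shows "ga_primitive_idempotent (ga_e0 :: 'g::{ab_group_add,finite} \<Rightarrow> 'f)"
  unfolding ga_primitive_idempotent_def
proof (intro conjI notI)
  show "(ga_e0 :: 'g \<Rightarrow> 'f) = 0 \<Longrightarrow> False" using e0_nz[OF n] by simp
  show "ga_idempotent (ga_e0 :: 'g \<Rightarrow> 'f)" using e0_idem[OF n] unfolding ga_idempotent_def .
  assume "\<exists>e1 e2. ga_idempotent e1 \<and> ga_idempotent e2 \<and> e1 \<noteq> 0 \<and> e2 \<noteq> 0 \<and>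
            ga_mult e1 e2 = 0 \<and> (ga_e0 :: 'g \<Rightarrow> 'f) = e1 + e2"
  then obtain e1 e2 :: "'g \<Rightarrow> 'f" where h: "ga_mult e1 e1 = e1" "ga_mult e2 e2 = e2" "e1 \<noteq> 0" "e2 \<noteq> 0"
            "ga_mult e1 e2 = 0" "ga_e0 = e1 + e2" unfolding ga_idempotent_def by blast
  have z: "ga_e0 \<noteq> (0 :: 'g \<Rightarrow> 'f)" using e0_nz[OF n] .
  have r1: "ga_mult e1 ga_e0 = e1" unfolding h(6) ga_mult_add_right h(1) h(5) by simp
  have r2: "ga_mult e2 ga_e0 = e2" unfolding h(6) ga_mult_add_right h(2) by (simp add: h(5) ga_mult_comm[of e2])
  obtain c1 where c1: "e1 = ga_scale c1 ga_e0" using r1 mult_e0 by metis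
  obtain c2 where c2: "e2 = ga_scale c2 ga_e0" using r2 mult_e0 by metis
  have sq: "ga_mult (ga_scale c ga_e0) (ga_scale d ga_e0) = ga_scale (c * d) (ga_e0 :: 'g \<Rightarrow> 'f)" for c d
    using e0_idem[OF n] by (metis ga_mult_scale_left ga_mult_comm ga_scale_def mult.commute mult.left_commute ext)
  have inj: "ga_scale c ga_e0 = ga_scale d (ga_e0 :: 'g \<Rightarrow> 'f) \<Longrightarrow> c = d" for c d
    using n by (auto simp: ga_scale_def ga_e0_def fun_eq_iff)
  have "c1 * c1 = c1" using h(1) c1 sq inj by metis
  moreover have "c1 \<noteq> 0" using h(3) c1 by (auto simp: ga_scale_def fun_eq_iff)
  ultimately have "c1 = 1" by (metis mult_cancel_right2)
  have "c2 * c2 = c2" using h(2) c2 sq inj by metis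
  moreover have "c2 \<noteq> 0" using h(4) c2 by (auto simp: ga_scale_def fun_eq_iff)
  ultimately have "c2 = 1" by (metis mult_cancel_right2)
  have "ga_mult e1 e2 = ga_e0" using c1 c2 \<open>c1 = 1\<close> \<open>c2 = 1\<close> sq[of 1 1] by (simp add: ga_scale_def)
  then show False using h(5) z by simp
qed




lemma fun_sum_apply: "(\<Sum>i\<in>A. f i) x = (\<Sum>i\<in>A. f i x)"
  by (induction A rule: infinite_finite_induct) auto

interpretation ga: vector_space "ga_scale :: 'f::field \<Rightarrow> ('g \<Rightarrow> 'f) \<Rightarrow> ('g \<Rightarrow> 'f)"
  by unfold_locales (auto simp: ga_scale_def fun_eq_iff algebra_simps)

lemma ga_fdvs:
  obtains B where "finite_dimensional_vector_space (ga_scale :: 'f::{field,finite} \<Rightarrow> ('g::finite \<Rightarrow> 'f) \<Rightarrow> ('g \<Rightarrow> 'f)) B"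
proof -
  obtain B :: "('g \<Rightarrow> 'f) set" where B: "ga.independent B" "UNIV \<subseteq> ga.span B"
    using ga.basis_exists[of UNIV] by blast
  have "finite_dimensional_vector_space (ga_scale :: 'f \<Rightarrow> ('g \<Rightarrow> 'f) \<Rightarrow> ('g \<Rightarrow> 'f)) B"
    by unfold_locales (use B in auto)
  then show ?thesis using that by blast
qed

lemma ga_dim_def': "ga_dim J = ga.dim J"
  by (simp add: ga_dim_def)

lemma subspace_ideal: "ga.subspace (ga_ideal (t :: 'g::{ab_group_add,finite} \<Rightarrow> 'f::field))"
  unfolding ga.subspace_def ga_ideal_def
proof (intro conjI ballI allI)
  show "0 \<in> {ga_mult x t |x. True}" by (auto intro!: exI[of _ 0])
  fix x y assume "x \<in> {ga_mult x t |x. True}" "y \<in> {ga_mult x t |x. True}"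
  then show "x + y \<in> {ga_mult x t |x. True}" by (auto simp: ga_mult_add_left[symmetric])
next
  fix c x assume "x \<in> {ga_mult x t |x. True}"
  then show "ga_scale c x \<in> {ga_mult x t |x. True}" by (auto simp: ga_mult_scale_left[symmetric])
qed

lemma subspace_ideal_sum: "ga.subspace (ga_ideal_sum (T :: ('g::{ab_group_add,finite} \<Rightarrow> 'f::field) set))"
  unfolding ga.subspace_def ga_ideal_sum_def
proof (intro conjI ballI allI)
  show "0 \<in> {\<Sum>e\<in>T. x e |x. \<forall>e\<in>T. x e \<in> ga_ideal e}"
    using ga.subspace_0[OF subspace_ideal] by (auto intro!: exI[of _ "\<lambda>_. 0"])
  fix a b assume "a \<in> {\<Sum>e\<in>T. x e |x. \<forall>e\<in>T. x e \<in> ga_ideal e}" "b \<in> {\<Sum>e\<in>T. x e |x. \<forall>e\<in>T. x e \<in> ga_ideal e}"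
  then obtain x y where "a = (\<Sum>e\<in>T. x e)" "\<forall>e\<in>T. x e \<in> ga_ideal e" "b = (\<Sum>e\<in>T. y e)" "\<forall>e\<in>T. y e \<in> ga_ideal e"
    by blast
  then show "a + b \<in> {\<Sum>e\<in>T. x e |x. \<forall>e\<in>T. x e \<in> ga_ideal e}"
    by (intro CollectI exI[of _ "\<lambda>e. x e + y e"]) (auto simp: sum.distrib intro!: ga.subspace_add[OF subspace_ideal])
next
  fix c a assume "a \<in> {\<Sum>e\<in>T. x e |x. \<forall>e\<in>T. x e \<in> ga_ideal e}"
  then obtain x where "a = (\<Sum>e\<in>T. x e)" "\<forall>e\<in>T. x e \<in> ga_ideal e" by blast
  then show "ga_scale c a \<in> {\<Sum>e\<in>T. x e |x. \<forall>e\<in>T. x e \<in> ga_ideal e}"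
    using ga.subspace_scale[OF subspace_ideal]
    by (auto intro!: exI[of _ "\<lambda>e. ga_scale c (x e)"] simp: ga.scale_sum_right)
qed

lemma ideal_sum_insert:
  assumes "t \<notin> T" "finite T"
  shows "ga_ideal_sum (insert t T) = {x + y | x y. x \<in> ga_ideal t \<and> y \<in> ga_ideal_sum (T :: ('g::{ab_group_add,finite} \<Rightarrow> 'f::field) set)}"
proof (rule subset_antisym; rule subsetI)
  fix z assume "z \<in> ga_ideal_sum (insert t T)"
  then obtain x where x: "z = (\<Sum>e\<in>insert t T. x e)" "\<forall>e\<in>insert t T. x e \<in> ga_ideal e"
    unfolding ga_ideal_sum_def by blast
  then show "z \<in> {x + y | x y. x \<in> ga_ideal t \<and> y \<in> ga_ideal_sum T}"
    using assms unfolding ga_ideal_sum_def by auto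
next
  fix z assume "z \<in> {x + y | x y. x \<in> ga_ideal t \<and> y \<in> ga_ideal_sum T}"
  then obtain a x where ax: "z = a + (\<Sum>e\<in>T. x e)" "a \<in> ga_ideal t" "\<forall>e\<in>T. x e \<in> ga_ideal e"
    unfolding ga_ideal_sum_def by blast
  have "(\<Sum>e\<in>insert t T. (x(t := a)) e) = a + (\<Sum>e\<in>T. x e)"
    using assms by (simp add: sum.insert) (intro sum.cong, auto)
  then show "z \<in> ga_ideal_sum (insert t T)"
    unfolding ga_ideal_sum_def using ax
    by (intro CollectI exI[of _ "x(t := a)"]) auto
qed

lemma in_ideal_idem:
  assumes "ga_idempotent t" "z \<in> ga_ideal t"
  shows "ga_mult z t = (z :: 'g::{ab_group_add,finite} \<Rightarrow> 'f::field)"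
  using assms unfolding ga_idempotent_def ga_ideal_def by (auto simp: ga_mult_assoc)

lemma dim_ideal_sum:
  fixes T :: "('g::{ab_group_add,finite} \<Rightarrow> 'f::{field,finite}) set"
  assumes "\<forall>t\<in>T. ga_idempotent t" "\<forall>s\<in>T. \<forall>t\<in>T. s \<noteq> t \<longrightarrow> ga_mult s t = 0"
  shows "ga_dim (ga_ideal_sum T) = (\<Sum>t\<in>T. ga_dim (ga_ideal t))"
proof -
  obtain B where "finite_dimensional_vector_space (ga_scale :: 'f \<Rightarrow> ('g \<Rightarrow> 'f) \<Rightarrow> ('g \<Rightarrow> 'f)) B"
    using ga_fdvs by blast
  then interpret fd: finite_dimensional_vector_space "ga_scale :: 'f \<Rightarrow> ('g \<Rightarrow> 'f) \<Rightarrow> ('g \<Rightarrow> 'f)" B .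
  have fin: "finite T" by simp
  show ?thesis using fin assms
  proof (induction T rule: finite_induct)
    case empty
    have "ga_ideal_sum {} = {0 :: 'g \<Rightarrow> 'f}" by (simp add: ga_ideal_sum_def)
    then show ?case by (simp add: ga_dim_def)
  next
    case (insert t T)
    have tid: "ga_idempotent t" using insert by simp
    have int: "ga_ideal t \<inter> ga_ideal_sum T = {0}"
    proof (rule subset_antisym; rule subsetI)
      fix z assume z: "z \<in> ga_ideal t \<inter> ga_ideal_sum T"
      then have z1: "ga_mult z t = z" using in_ideal_idem tid by blast
      obtain x where x: "z = (\<Sum>e\<in>T. x e)" "\<forall>e\<in>T. x e \<in> ga_ideal e"
        using z unfolding ga_ideal_sum_def by blast
      have "ga_mult (x e) t = 0" if "e \<in> T" for e
      proof -
        have "x e \<in> ga_ideal e" using x(2) that by blast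
        then obtain w where "x e = ga_mult w e" unfolding ga_ideal_def by blast
        moreover have "e \<noteq> t" using insert.hyps(2) that by blast
        moreover have "ga_mult e t = 0" using insert.prems(2) that \<open>e \<noteq> t\<close> insert_iff by blast
        ultimately show ?thesis by (simp add: ga_mult_assoc)
      qed
      then have "ga_mult z t = 0" unfolding x(1) ga_mult_sum_left by simp
      then show "z \<in> {0}" using z1 by simp
    next
      fix z assume "z \<in> {0 :: 'g \<Rightarrow> 'f}"
      then show "z \<in> ga_ideal t \<inter> ga_ideal_sum T"
        using ga.subspace_0[OF subspace_ideal] ga.subspace_0[OF subspace_ideal_sum] by auto
    qed
    have "ga_dim (ga_ideal_sum (insert t T)) = ga_dim (ga_ideal t) + ga_dim (ga_ideal_sum T)"
      using fd.dim_sums_Int[OF subspace_ideal subspace_ideal_sum, of t T] int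
      unfolding ideal_sum_insert[OF insert(2,1)] ga_dim_def by simp
    then show ?case using insert by simp
  qed
qed




lemma ga_dim_pos:
  fixes e :: "'g::{ab_group_add,finite} \<Rightarrow> 'f::{field,finite}"
  assumes "ga_idempotent e" "e \<noteq> 0"
  shows "ga_dim (ga_ideal e) \<ge> 1"
proof -
  obtain B where "finite_dimensional_vector_space (ga_scale :: 'f \<Rightarrow> ('g \<Rightarrow> 'f) \<Rightarrow> ('g \<Rightarrow> 'f)) B"
    using ga_fdvs by blast
  then interpret fd: finite_dimensional_vector_space "ga_scale :: 'f \<Rightarrow> ('g \<Rightarrow> 'f) \<Rightarrow> ('g \<Rightarrow> 'f)" B .
  have "e = ga_mult e e" using assms(1) unfolding ga_idempotent_def by simp
  then have "e \<in> ga_ideal e" unfolding ga_ideal_def by blast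
  then have "\<not> ga_ideal e \<subseteq> {0}" using assms(2) by blast
  then have "ga.dim (ga_ideal e) \<noteq> 0" using fd.dim_eq_0 by blast
  then have "ga_dim (ga_ideal e) \<noteq> 0" unfolding ga_dim_def by assumption
  then show ?thesis by linarith
qed

lemma ga_dim_mono:
  fixes A :: "('g::{ab_group_add,finite} \<Rightarrow> 'f::{field,finite}) set"
  assumes "A \<subseteq> C"
  shows "ga_dim A \<le> ga_dim C"
proof -
  obtain B where "finite_dimensional_vector_space (ga_scale :: 'f \<Rightarrow> ('g \<Rightarrow> 'f) \<Rightarrow> ('g \<Rightarrow> 'f)) B"
    using ga_fdvs by blast
  then interpret fd: finite_dimensional_vector_space "ga_scale :: 'f \<Rightarrow> ('g \<Rightarrow> 'f) \<Rightarrow> ('g \<Rightarrow> 'f)" B .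
  show ?thesis using fd.dim_subset[OF assms] by (simp add: ga_dim_def)
qed

lemma ga_dim_le_n:
  fixes A :: "('g::{ab_group_add,finite} \<Rightarrow> 'f::field) set"
  shows "ga_dim A \<le> card (UNIV :: 'g set)"
proof -
  define W :: "('g \<Rightarrow> 'f) set" where "W = range (\<lambda>g h. if h = g then 1 else 0)"
  have "x \<in> ga.span W" for x :: "'g \<Rightarrow> 'f"
  proof -
    have "(\<Sum>g\<in>UNIV. x g * (if xa = g then 1 else 0)) = x xa" for xa
    proof -
      have "(\<Sum>g\<in>UNIV. x g * (if xa = g then 1 else 0)) = (\<Sum>g\<in>UNIV. if xa = g then x g else 0)"
        by (rule sum.cong) auto
      then show ?thesis by simp
    qed
    then have "x = (\<Sum>g\<in>UNIV. ga_scale (x g) (\<lambda>h. if h = g then 1 else 0))"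
      by (simp add: fun_eq_iff fun_sum_apply ga_scale_def)
    also have "\<dots> \<in> ga.span W"
      by (intro ga.span_sum ga.span_scale ga.span_base) (auto simp: W_def)
    finally show ?thesis .
  qed
  then have "A \<subseteq> ga.span W" by blast
  then have "ga.dim A \<le> card W" by (rule ga.dim_le_card) (simp add: W_def)
  also have "card W \<le> card (UNIV :: 'g set)" unfolding W_def by (rule card_image_le) simp
  finally show ?thesis by (simp add: ga_dim_def)
qed


lemma exists_prim:
  assumes n: "of_nat (card (UNIV::'g set)) \<noteq> (0::'f::{field,finite})"
    and n1: "card (UNIV :: ('g::{ab_group_add,finite}) set) > 1"
  shows "\<exists>f::'g\<Rightarrow>'f. ga_primitive_idempotent f \<and> f \<noteq> ga_e0"
proof -
  define C where "C = {e::'g\<Rightarrow>'f. ga_idempotent e \<and> e \<noteq> 0 \<and> ga_mult e ga_e0 = 0}"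
  define u :: "'g \<Rightarrow> 'f" where "u = ga_one - ga_e0"
  have e0e0: "ga_mult ga_e0 ga_e0 = (ga_e0 :: 'g \<Rightarrow> 'f)" using e0_idem[OF n] .
  have "ga_mult u u = u" unfolding u_def
    by (simp add: ga_mult_diff_left ga_mult_diff_right e0e0)
  moreover have "ga_mult u ga_e0 = 0" unfolding u_def
    by (simp add: ga_mult_diff_left e0e0)
  moreover have "u \<noteq> 0"
  proof
    assume u0: "u = 0"
    obtain g :: 'g where g: "g \<noteq> 0"
    proof -
      have "UNIV \<noteq> {0::'g}"
      proof
        assume "UNIV = {0::'g}"
        then have "card (UNIV::'g set) = card {0::'g}" by (rule arg_cong)
        then have "card (UNIV::'g set) = 1" by simp
        with n1 show False by simp
      qed
      then show ?thesis using that by blast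
    qed
    have "u g = 0" using u0 by simp
    then show False using g n by (simp add: u_def ga_one_def ga_e0_def)
  qed
  ultimately have uC: "u \<in> C" unfolding C_def ga_idempotent_def by blast
  obtain e where eC: "e \<in> C" and emin: "\<And>e'. e' \<in> C \<Longrightarrow> card (ga_ideal e) \<le> card (ga_ideal e')"
    using ex_has_least_nat[of "\<lambda>e. e \<in> C" u "\<lambda>e. card (ga_ideal e)"] uC by blast
  have ee: "ga_mult e e = e" and enz: "e \<noteq> 0" and ee0: "ga_mult e ga_e0 = 0"
    using eC unfolding C_def ga_idempotent_def by auto
  have prim: "ga_primitive_idempotent e"
    unfolding ga_primitive_idempotent_def
  proof (intro conjI notI)
    show "e = 0 \<Longrightarrow> False" using enz by simp
    show "ga_idempotent e" using ee unfolding ga_idempotent_def .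
    assume "\<exists>e1 e2. ga_idempotent e1 \<and> ga_idempotent e2 \<and> e1 \<noteq> 0 \<and> e2 \<noteq> 0 \<and>
            ga_mult e1 e2 = 0 \<and> e = e1 + e2"
    then obtain e1 e2 where h: "ga_mult e1 e1 = e1" "ga_mult e2 e2 = e2" "e1 \<noteq> 0" "e2 \<noteq> 0"
            "ga_mult e1 e2 = 0" "e = e1 + e2" unfolding ga_idempotent_def by blast
    have h21: "ga_mult e2 e1 = 0" using h(5) ga_mult_comm by metis
    have e1e: "ga_mult e1 e = e1" unfolding h(6) ga_mult_add_right h(1) h(5) by simp
    have e2e: "ga_mult e2 e = e2" unfolding h(6) ga_mult_add_right h(2) h21 by simp
    have "ga_mult e1 ga_e0 = 0" using e1e ee0 by (metis ga_mult_assoc ga_mult_zero_right)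
    then have e1C: "e1 \<in> C" unfolding C_def ga_idempotent_def using h by blast
    have sub: "ga_ideal e1 \<subseteq> ga_ideal e"
      unfolding ga_ideal_def using e1e by (auto simp: ga_mult_assoc[symmetric]) (metis ga_mult_assoc)
    have "e2 \<in> ga_ideal e" unfolding ga_ideal_def using e2e by (metis (mono_tags, lifting) mem_Collect_eq)
    moreover have "e2 \<notin> ga_ideal e1"
    proof
      assume "e2 \<in> ga_ideal e1"
      then obtain y where "e2 = ga_mult y e1" unfolding ga_ideal_def by blast
      then have "ga_mult e2 e2 = ga_mult y (ga_mult e1 e2)" by (metis ga_mult_assoc)
      then show False using h by simp
    qed
    ultimately have "ga_ideal e1 \<subset> ga_ideal e" using sub by blast
    then have "card (ga_ideal e1) < card (ga_ideal e)" by (rule psubset_card_mono[rotated]) simp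
    then show False using emin[OF e1C] by simp
  qed
  moreover have "e \<noteq> ga_e0" using ee0 e0e0 e0_nz[OF n] by auto
  ultimately show ?thesis by blast
qed


definition compq :: "nat \<Rightarrow> ('g::{ab_group_add,finite} \<Rightarrow> 'f::field) \<Rightarrow> ('g \<Rightarrow> 'f)" where
  "compq q f = (if ga_tau q f = f then f else f + ga_tau q f)"

context frob
begin

lemma prim_e0_orth:
  fixes f :: "'g::{ab_group_add,finite} \<Rightarrow> 'f"
  assumes n: "of_nat (card (UNIV::'g set)) \<noteq> (0::'f)"
    and f: "ga_primitive_idempotent f" "f \<noteq> ga_e0"
  shows "ga_mult f ga_e0 = 0"
  using prim_orth[OF f(1) e0_primitive[OF n]] f(2) by blast

lemma tau_prim_ne:
  fixes f :: "'g::{ab_group_add,finite} \<Rightarrow> 'f"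
  assumes f: "ga_primitive_idempotent f" "f \<noteq> ga_e0"
  shows "ga_primitive_idempotent (ga_tau q f) \<and> ga_tau q f \<noteq> ga_e0"
  using tau_primitive[OF f(1)] f(2) tau_e0 tau_tau by metis

lemma E_sub:
  fixes s :: "'g::{ab_group_add,finite} \<Rightarrow> 'f"
  assumes "s \<in> Ehat_dagger q"
  shows "\<exists>f. ga_primitive_idempotent f \<and> f \<noteq> ga_e0 \<and> s = compq q f"
  using assms tau_e0 unfolding Ehat_dagger_def compq_def by auto

lemma comp_props:
  fixes f :: "'g::{ab_group_add,finite} \<Rightarrow> 'f"
  assumes n: "of_nat (card (UNIV::'g set)) \<noteq> (0::'f)"
    and f: "ga_primitive_idempotent f" "f \<noteq> ga_e0"
  shows "ga_idempotent (compq q f) \<and> compq q f \<noteq> 0 \<and> ga_mult (compq q f) ga_e0 = 0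
         \<and> ga_ideal f \<subseteq> ga_ideal (compq q f)"
proof (cases "ga_tau q f = f")
  case True
  then show ?thesis using f prim_e0_orth[OF n f] unfolding compq_def ga_primitive_idempotent_def by auto
next
  case False
  define t where "t = ga_tau q f"
  have t: "ga_primitive_idempotent t" "t \<noteq> ga_e0" using tau_prim_ne[OF f] unfolding t_def by auto
  have ft: "ga_mult f t = 0" using prim_orth[OF f(1) t(1)] False unfolding t_def by auto
  have tf: "ga_mult t f = 0" using ft ga_mult_comm by metis
  have ff: "ga_mult f f = f" using f unfolding ga_primitive_idempotent_def ga_idempotent_def by blast
  have tt: "ga_mult t t = t" using t unfolding ga_primitive_idempotent_def ga_idempotent_def by blast
  have c: "compq q f = f + t" using False unfolding compq_def t_def by simp
  have idem: "ga_mult (f + t) (f + t) = f + t"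
    by (simp add: ga_mult_add_left ga_mult_add_right ff ft tf tt)
  have cf: "ga_mult (f + t) f = f" by (simp add: ga_mult_add_left ff tf)
  have fc: "ga_mult f (f + t) = f" by (simp add: ga_mult_add_right ff ft)
  have nz: "f + t \<noteq> 0"
  proof
    assume "f + t = 0"
    then have "f = 0" using cf by simp
    then show False using f unfolding ga_primitive_idempotent_def by simp
  qed
  have e0: "ga_mult (f + t) ga_e0 = 0"
    using prim_e0_orth[OF n f] prim_e0_orth[OF n t] by (simp add: ga_mult_add_left)
  have sub: "ga_ideal f \<subseteq> ga_ideal (f + t)"
  proof
    fix z assume "z \<in> ga_ideal f"
    then obtain x where "z = ga_mult x f" unfolding ga_ideal_def by blast
    then have "z = ga_mult z (f + t)" using fc by (simp add: ga_mult_assoc)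
    then show "z \<in> ga_ideal (f + t)" unfolding ga_ideal_def by blast
  qed
  show ?thesis using c idem nz e0 sub unfolding ga_idempotent_def by simp
qed

lemma comp_orth:
  fixes f f' :: "'g::{ab_group_add,finite} \<Rightarrow> 'f"
  assumes f: "ga_primitive_idempotent f" "f \<noteq> ga_e0"
    and f': "ga_primitive_idempotent f'" "f' \<noteq> ga_e0"
  shows "compq q f = compq q f' \<or> ga_mult (compq q f) (compq q f') = 0"
proof (cases "f' = f \<or> f' = ga_tau q f")
  case True
  then show ?thesis
  proof
    assume "f' = ga_tau q f"
    then have "compq q f = compq q f'" unfolding compq_def by (auto simp: add.commute)
    then show ?thesis by simp
  qed simp
next
  case False
  have t: "ga_primitive_idempotent (ga_tau q f)" using tau_prim_ne[OF f] by auto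
  have t': "ga_primitive_idempotent (ga_tau q f')" using tau_prim_ne[OF f'] by auto
  have n1: "f \<noteq> f'" "ga_tau q f \<noteq> f'" "f \<noteq> ga_tau q f'" "ga_tau q f \<noteq> ga_tau q f'"
    using False by (auto dest: tau_inj)
  have z: "ga_mult f f' = 0" "ga_mult (ga_tau q f) f' = 0" "ga_mult f (ga_tau q f') = 0"
     "ga_mult (ga_tau q f) (ga_tau q f') = 0"
    using prim_orth[OF f(1) f'(1)] prim_orth[OF t f'(1)] prim_orth[OF f(1) t'] prim_orth[OF t t'] n1
    by auto
  show ?thesis unfolding compq_def
    by (simp add: ga_mult_add_left ga_mult_add_right z)
qed

end




lemma count_bound:
  fixes E :: "'a set" and m N K :: nat
  assumes fin: "finite E" and mE: "card E \<le> N - 1" and N: "N \<ge> 1"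
  shows "card {S. S \<subseteq> E \<and> S \<noteq> {} \<and> card S \<le> K} \<le> N ^ K - 1"
proof -
  have sub: "{S. S \<subseteq> E \<and> S \<noteq> {} \<and> card S \<le> K} \<subseteq> (\<Union>k\<in>{1..K}. {S. S \<subseteq> E \<and> card S = k})"
  proof
    fix S assume "S \<in> {S. S \<subseteq> E \<and> S \<noteq> {} \<and> card S \<le> K}"
    then have "S \<subseteq> E" "S \<noteq> {}" "card S \<le> K" by auto
    moreover have "finite S" using \<open>S \<subseteq> E\<close> fin finite_subset by blast
    ultimately have "card S \<in> {1..K}" by (simp add: Suc_leI card_gt_0_iff)
    then show "S \<in> (\<Union>k\<in>{1..K}. {S. S \<subseteq> E \<and> card S = k})" using \<open>S \<subseteq> E\<close> by blast
  qed
  have "card {S. S \<subseteq> E \<and> S \<noteq> {} \<and> card S \<le> K} \<le> card (\<Union>k\<in>{1..K}. {S. S \<subseteq> E \<and> card S = k})"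
    by (rule card_mono[OF _ sub]) (use fin in auto)
  also have "\<dots> \<le> (\<Sum>k\<in>{1..K}. card {S. S \<subseteq> E \<and> card S = k})" by (rule card_UN_le) simp
  also have "\<dots> = (\<Sum>k\<in>{1..K}. card E choose k)" using n_subsets[OF fin] by simp
  also have "\<dots> \<le> (\<Sum>k\<in>{1..K}. (K choose k) * (N - 1) ^ k)"
  proof (rule sum_mono)
    fix k assume k: "k \<in> {1..K}"
    have "card E choose k \<le> card E ^ k"
    proof (cases "k \<le> card E")
      case True then show ?thesis by (rule binomial_le_pow)
    next
      case False then show ?thesis by (simp add: binomial_eq_0)
    qed
    also have "\<dots> \<le> (N - 1) ^ k" using mE by (simp add: power_mono)
    also have "\<dots> \<le> (K choose k) * (N - 1) ^ k"
    proof -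
      have "k \<le> K" using k by simp
      then have "0 < K choose k" by (rule zero_less_binomial)
      then have "K choose k \<ge> 1" by linarith
      then show ?thesis by simp
    qed
    finally show "card E choose k \<le> (K choose k) * (N - 1) ^ k" .
  qed
  also have "\<dots> = N ^ K - 1"
  proof -
    have "N ^ K = ((N - 1) + 1) ^ K" using N by simp
    also have "\<dots> = (\<Sum>k\<le>K. (K choose k) * (N - 1) ^ k)"
      using binomial[of "N - 1" 1 K] by simp
    also have "\<dots> = 1 + (\<Sum>k\<in>{1..K}. (K choose k) * (N - 1) ^ k)"
    proof -
      have "{..K} = insert 0 {1..K}" by auto
      then show ?thesis by simp
    qed
    finally show ?thesis by simp
  qed
  finally show ?thesis .
qed


lemma main_bound:
  fixes l :: nat
  assumes fr: "frob TYPE('f::{field,finite}) q"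
    and n: "of_nat (card (UNIV :: ('g::{ab_group_add,finite}) set)) \<noteq> (0::'f)"
    and n1: "card (UNIV::'g set) > 1"
    and lmu: "mu_q TYPE('g) TYPE('f) \<le> l"
  shows "real (card (Omega q l :: ('g \<Rightarrow> 'f) set set))
           < real (card (UNIV :: 'g set)) powr (real l / real (mu_q TYPE('g) TYPE('f)))"
proof -
  interpret frob q "TYPE('f)" by (rule fr)
  define N where "N = card (UNIV::'g set)"
  define mu where "mu = mu_q TYPE('g) TYPE('f)"
  define P where "P = (\<lambda>e::'g\<Rightarrow>'f. ga_primitive_idempotent e \<and> e \<noteq> ga_e0)"
  define D where "D = {ga_dim (ga_ideal e) | e. P e}"
  have mu_D: "mu = Min D" unfolding mu_def D_def P_def mu_q_def by simp
  have finD: "finite D"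
  proof -
    have "D = (\<lambda>e. ga_dim (ga_ideal e)) ` {e. P e}" unfolding D_def by blast
    then show ?thesis by simp
  qed
  have DnE: "D \<noteq> {}" using exists_prim[OF n n1] unfolding D_def P_def by blast
  have mu_le: "mu \<le> ga_dim (ga_ideal f)" if "P f" for f
    unfolding mu_D by (rule Min_le[OF finD]) (use that in \<open>auto simp: D_def\<close>)
  have mu_pos: "mu \<ge> 1"
  proof -
    have "mu \<in> D" unfolding mu_D using Min_in[OF finD DnE] .
    then obtain e where "P e" "mu = ga_dim (ga_ideal e)" unfolding D_def by blast
    then show ?thesis using ga_dim_pos[of e] unfolding P_def ga_primitive_idempotent_def by auto
  qed
  define E where "E = (Ehat_dagger q :: ('g \<Rightarrow> 'f) set)"
  have Eprops: "ga_idempotent s \<and> ga_mult s ga_e0 = 0 \<and> mu \<le> ga_dim (ga_ideal s)" if sE: "s \<in> E" for s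
  proof -
    obtain f where f: "ga_primitive_idempotent f" "f \<noteq> ga_e0" "s = compq q f"
      using E_sub[of s] sE unfolding E_def by blast
    have c: "ga_idempotent s" "ga_mult s ga_e0 = 0" "ga_ideal f \<subseteq> ga_ideal s"
      using comp_props[OF n f(1,2)] f(3) by auto
    have "mu \<le> ga_dim (ga_ideal f)" using mu_le f unfolding P_def by blast
    also have "\<dots> \<le> ga_dim (ga_ideal s)" by (rule ga_dim_mono[OF c(3)])
    finally show ?thesis using c by blast
  qed
  have Eorth: "ga_mult s t = 0" if st: "s \<in> E" "t \<in> E" "s \<noteq> t" for s t
  proof -
    obtain f where f: "ga_primitive_idempotent f" "f \<noteq> ga_e0" "s = compq q f"
      using E_sub[of s] st unfolding E_def by blast
    obtain f' where f': "ga_primitive_idempotent f'" "f' \<noteq> ga_e0" "t = compq q f'"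
      using E_sub[of t] st unfolding E_def by blast
    show ?thesis using comp_orth[OF f(1,2) f'(1,2)] f(3) f'(3) st(3) by blast
  qed
  have e0e0: "ga_mult ga_e0 ga_e0 = (ga_e0 :: 'g \<Rightarrow> 'f)" using e0_idem[OF n] .
  have e0nz: "(ga_e0 :: 'g \<Rightarrow> 'f) \<noteq> 0" using e0_nz[OF n] .
  have e0E: "ga_e0 \<notin> E" using Eprops[of ga_e0] e0e0 e0nz by auto
  have finE: "finite E" by simp
  have dimS: "ga_dim (ga_ideal_sum S) = (\<Sum>t\<in>S. ga_dim (ga_ideal t))" if "S \<subseteq> E" for S
    by (rule dim_ideal_sum) (use that Eprops Eorth in blast)+
  have "ga_dim (ga_ideal_sum (insert ga_e0 E)) = (\<Sum>t\<in>insert ga_e0 E. ga_dim (ga_ideal t))"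
  proof (rule dim_ideal_sum)
    show "\<forall>t\<in>insert ga_e0 E. ga_idempotent t"
      using Eprops e0e0 unfolding ga_idempotent_def by blast
    show "\<forall>s\<in>insert ga_e0 E. \<forall>t\<in>insert ga_e0 E. s \<noteq> t \<longrightarrow> ga_mult s t = 0"
      using Eprops Eorth ga_mult_comm by (metis insert_iff)
  qed
  also have "\<dots> = ga_dim (ga_ideal (ga_e0 :: 'g \<Rightarrow> 'f)) + (\<Sum>t\<in>E. ga_dim (ga_ideal t))"
    using e0E finE by simp
  finally have "ga_dim (ga_ideal (ga_e0 :: 'g \<Rightarrow> 'f)) + (\<Sum>t\<in>E. ga_dim (ga_ideal t)) \<le> N"
    using ga_dim_le_n unfolding N_def by metis
  moreover have "ga_dim (ga_ideal (ga_e0 :: 'g \<Rightarrow> 'f)) \<ge> 1"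
    using ga_dim_pos e0e0 e0nz unfolding ga_idempotent_def by blast
  moreover have "card E * mu \<le> (\<Sum>t\<in>E. ga_dim (ga_ideal t))"
    using sum_bounded_below[of E mu "\<lambda>t. ga_dim (ga_ideal t)"] Eprops by simp
  ultimately have "card E * mu \<le> N - 1" by linarith
  then have cardE: "card E \<le> N - 1" using mu_pos
    by (metis dual_order.trans mult.right_neutral mult_le_mono2)
  define K where "K = l div mu"
  have OmSub: "(Omega q l :: ('g \<Rightarrow> 'f) set set) \<subseteq> ga_ideal_sum ` {S. S \<subseteq> E \<and> S \<noteq> {} \<and> card S \<le> K}"
  proof
    fix J assume "J \<in> (Omega q l :: ('g \<Rightarrow> 'f) set set)"
    then obtain S where S: "S \<subseteq> E" "J = ga_ideal_sum S" "ga_dim J = l"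
      unfolding Omega_def E_def by blast
    have "card S * mu \<le> (\<Sum>t\<in>S. ga_dim (ga_ideal t))"
      using sum_bounded_below[of S mu "\<lambda>t. ga_dim (ga_ideal t)"] Eprops S(1) by auto
    also have "\<dots> = l" using dimS[OF S(1)] S by simp
    finally have "card S \<le> K" unfolding K_def using mu_pos
      by (simp add: less_eq_div_iff_mult_less_eq)
    moreover have "S \<noteq> {}"
    proof
      assume "S = {}"
      then have "l = 0" using dimS[OF S(1)] S by simp
      then show False using lmu mu_pos unfolding mu_def by simp
    qed
    ultimately show "J \<in> ga_ideal_sum ` {S. S \<subseteq> E \<and> S \<noteq> {} \<and> card S \<le> K}" using S by blast
  qed
  have "card (Omega q l :: ('g \<Rightarrow> 'f) set set) \<le> card (ga_ideal_sum ` {S. S \<subseteq> E \<and> S \<noteq> {} \<and> card S \<le> K})"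
    by (rule card_mono[OF _ OmSub]) simp
  also have "\<dots> \<le> card {S. S \<subseteq> E \<and> S \<noteq> {} \<and> card S \<le> K}" by (rule card_image_le) simp
  also have "\<dots> \<le> N ^ K - 1" by (rule count_bound[OF finE cardE]) (use n1 in \<open>simp add: N_def\<close>)
  finally have c1: "card (Omega q l :: ('g \<Rightarrow> 'f) set set) \<le> N ^ K - 1" .
  have NK: "N ^ K \<ge> 1" using n1 unfolding N_def by simp
  have "real (card (Omega q l :: ('g \<Rightarrow> 'f) set set)) < real N ^ K"
  proof -
    have "card (Omega q l :: ('g \<Rightarrow> 'f) set set) < N ^ K" using c1 NK by linarith
    then show ?thesis by (metis of_nat_less_iff of_nat_power)
  qed
  also have "real N ^ K = real N powr real K" using n1 unfolding N_def by (simp add: powr_realpow)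
  also have "\<dots> \<le> real N powr (real l / real mu)"
  proof (rule powr_mono)
    show "real K \<le> real l / real mu" unfolding K_def by (rule of_nat_div_le_of_nat)
    show "1 \<le> real N" using n1 unfolding N_def by simp
  qed
  finally show ?thesis unfolding N_def mu_def .
qed


theorem lemma3p12:
  fixes q :: nat and l :: nat
  assumes "\<exists>p k. prime p \<and> k > 0 \<and> q = p ^ k"
    and "card (UNIV :: ('f::{field,finite}) set) = q ^ 2"
    and "odd (card (UNIV :: ('g::{ab_group_add,finite}) set))"
    and "card (UNIV :: 'g set) > 1"
    and "coprime (card (UNIV :: 'g set)) q"
    and "mu_q TYPE('g) TYPE('f) \<le> l" and "l < card (UNIV :: 'g set)"
  shows "real (card (Omega q l :: ('g \<Rightarrow> 'f) set set))
           < real (card (UNIV :: 'g set)) powr (real l / real (mu_q TYPE('g) TYPE('f)))"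
proof -
  have fr: "frob TYPE('f) q" by (rule frob_from_assms[OF assms(1,2)])
  obtain p k where p: "prime p" "k > 0" "q = p ^ k" using assms(1) by blast
  have ch: "CHAR('f) = p" using field_CHAR_eq[OF p(1,2)] assms(2) p(3) by simp
  have "\<not> p dvd card (UNIV :: 'g set)"
  proof
    assume "p dvd card (UNIV :: 'g set)"
    moreover have "p dvd q" using p by simp
    ultimately have "p dvd 1" using assms(5) by (metis coprime_common_divisor)
    then show False using p(1) by simp
  qed
  then have n: "of_nat (card (UNIV :: 'g set)) \<noteq> (0::'f)"
    using of_nat_eq_0_iff_char_dvd[where 'a='f] ch by simp
  show ?thesis by (rule main_bound[OF fr n assms(4,6)])
qed

end
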